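(* Let $(X,\mathcal{A},\mu)$ be a probability space and let $\{E_i\}_{i\in\mathbb{N}}$ be a sequence of sets in $\mathcal{A}$. Suppose that $$\sum_{i=1}^\infty \mu(E_i)=\infty,$$ and that there exists a constant $C>0$ such that $$\sum_{s,t=1}^Q \mu(E_s\cap E_t)\le C\Big(\sum_{s=1}^Q\mu(E_s)\Big)^2\quad\text{for infinitely many }Q\in\mathbb{N}.$$ Suppose in addition that condition (M1) holds. Then $\mu(E_\infty)=1$.
   Context: $E_\infty:=\limsup_{i\to\infty}E_i=\bigcap_{t=1}^\infty\bigcup_{i=t}^\infty E_i$. Condition (M1): for every $\delta>0$ and all natural numbers $q_1<q_2$ there exists $i_0=i_0(q_1,q_2,\delta)$ such that for all $i\ge i_0$, $$\mu(A\cap E_i)\le(1+\delta)\mu(A)\mu(E_i),\qquad\text{where } A=\bigcup_{j=q_1}^{q_2}E_j.$$ *)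

theory Defs
  imports "HOL-Probability.Probability"
begin

definition limsup_set :: "(nat \<Rightarrow> 'a set) \<Rightarrow> 'a set" where
  "limsup_set E = (\<Inter>t\<in>{1..}. \<Union>i\<in>{t..}. E i)"

definition cond_M1 :: "'a measure \<Rightarrow> (nat \<Rightarrow> 'a set) \<Rightarrow> bool" where
  "cond_M1 M E \<longleftrightarrow>
    (\<forall>\<delta>>0. \<forall>q1 q2::nat. 1 \<le> q1 \<and> q1 < q2 \<longrightarrow>
      (\<exists>i0. \<forall>i\<ge>i0.
         measure M ((\<Union>j\<in>{q1..q2}. E j) \<inter> E i)
           \<le> (1 + \<delta>) * measure M (\<Union>j\<in>{q1..q2}. E j) * measure M (E i)))"

end

theory Submission imports Defs begin

lemma chung_erdos:
  fixes F :: "nat \<Rightarrow> 'a set"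
  assumes P: "prob_space M" and fin: "finite I" and meas: "\<And>i. i\<in>I \<Longrightarrow> F i \<in> sets M"
  shows "(\<Sum>i\<in>I. measure M (F i))^2 \<le> measure M (\<Union>i\<in>I. F i) * (\<Sum>s\<in>I. \<Sum>t\<in>I. measure M (F s \<inter> F t))"
proof -
  interpret prob_space M by fact
  define U where "U = (\<Union>i\<in>I. F i)"
  define S where "S = (\<lambda>x. \<Sum>i\<in>I. indicator (F i) x :: real)"
  have U: "U \<in> sets M" unfolding U_def using fin meas by auto
  have intI: "integrable M (indicator A :: 'a \<Rightarrow> real)" if "A \<in> sets M" for A
    using that by (simp add: integrable_indicator_iff less_top[symmetric])
  have intS: "integrable M S" unfolding S_def using meas intI by auto
  have SS: "S x * S x = (\<Sum>s\<in>I. \<Sum>t\<in>I. indicator (F s \<inter> F t) x)" for x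
    unfolding S_def sum_product by (simp add: indicator_inter_arith)
  have intSS: "integrable M (\<lambda>x. S x * S x)" unfolding SS using meas intI by auto
  have a: "integral\<^sup>L M S = (\<Sum>i\<in>I. measure M (F i))"
    unfolding S_def using meas intI by (simp add: Int_absorb2 sets.sets_into_space)
  have b: "integral\<^sup>L M (\<lambda>x. S x * S x) = (\<Sum>s\<in>I. \<Sum>t\<in>I. measure M (F s \<inter> F t))"
    unfolding SS using meas intI
    by (simp add: integral_sum Int_absorb2 sets.sets_into_space sets.Int)
  have u: "integral\<^sup>L M (indicator U :: 'a \<Rightarrow> real) = measure M U"
    using U by (simp add: Int_absorb2 sets.sets_into_space)
  have SU: "S x * indicator U x = S x" for x
    by (auto simp: S_def U_def indicator_def intro!: sum.neutral)
  have q: "0 \<le> (\<Sum>s\<in>I. \<Sum>t\<in>I. measure M (F s \<inter> F t)) - 2 * l * (\<Sum>i\<in>I. measure M (F i)) + l^2 * measure M U" for l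
  proof -
    have "0 \<le> integral\<^sup>L M (\<lambda>x. (S x - l * indicator U x)^2)"
      by (simp add: integral_nonneg)
    also have "(\<lambda>x. (S x - l * indicator U x)^2) = (\<lambda>x. (S x * S x - 2 * l * S x) + l^2 * indicator U x)"
      apply (rule ext) subgoal for x using SU[of x] by (auto simp: power2_eq_square algebra_simps indicator_def) done
    also have "integral\<^sup>L M \<dots> = integral\<^sup>L M (\<lambda>x. S x * S x) - 2 * l * integral\<^sup>L M S + l^2 * integral\<^sup>L M (indicator U)"
      using intS intSS intI[OF U] by (simp add: integral_add integral_diff)
    finally show ?thesis using a b u by simp
  qed
  define A where "A = (\<Sum>i\<in>I. measure M (F i))"
  define B where "B = (\<Sum>s\<in>I. \<Sum>t\<in>I. measure M (F s \<inter> F t))"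
  define u' where "u' = measure M U"
  have A0: "A \<ge> 0" unfolding A_def by (simp add: sum_nonneg)
  show ?thesis
  proof (cases "u' > 0")
    case True
    have "0 \<le> B - 2 * (A/u') * A + (A/u')^2 * u'" using q[of "A/u'"] unfolding A_def B_def u'_def by simp
    also have "\<dots> = B - A^2/u'" using True by (simp add: field_simps power2_eq_square)
    finally have "A^2/u' \<le> B" by simp
    hence "A^2 \<le> u' * B" using True by (simp add: field_simps)
    thus ?thesis unfolding A_def B_def u'_def U_def .
  next
    case False
    hence u0: "u' = 0" unfolding u'_def using measure_nonneg[of M U] by linarith
    have "A \<le> 0"
    proof (rule ccontr)
      assume "\<not> A \<le> 0"
      hence "0 \<le> B - 2 * ((B+1)/(2*A)) * A" using q[of "(B+1)/(2*A)"] u0 unfolding A_def B_def u'_def by simp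
      also have "\<dots> = -1" using \<open>\<not> A \<le> 0\<close> by (simp add: field_simps)
      finally show False by simp
    qed
    hence "A = 0" using A0 by simp
    thus ?thesis using u0 unfolding A_def B_def u'_def U_def by simp
  qed
qed

lemma diverge_partial:
  fixes f :: "nat \<Rightarrow> real"
  assumes nn: "\<And>i. f i \<ge> 0" and div: "(\<Sum>i. ennreal (f (Suc i))) = \<infinity>"
  shows "\<exists>N. \<forall>Q\<ge>N. (\<Sum>s\<in>{1..Q}. f s) > L"
proof -
  have "\<exists>N. (\<Sum>s\<in>{1..N}. f s) > L"
  proof (rule ccontr)
    assume "\<not> ?thesis"
    hence le: "(\<Sum>i<n. f (Suc i)) \<le> L" for n
      using sum.atLeast1_atMost_eq[of f n] by (metis One_nat_def not_less)
    have "summable (\<lambda>i. f (Suc i))" by (rule summableI_nonneg_bounded[OF nn le])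
    hence "(\<Sum>i. ennreal (f (Suc i))) = ennreal (\<Sum>i. f (Suc i))"
      using suminf_ennreal2[of "\<lambda>i. f (Suc i)"] nn by blast
    thus False using div by simp
  qed
  then obtain N where N: "(\<Sum>s\<in>{1..N}. f s) > L" by blast
  have "(\<Sum>s\<in>{1..Q}. f s) > L" if "Q \<ge> N" for Q
  proof -
    have "(\<Sum>s\<in>{1..N}. f s) \<le> (\<Sum>s\<in>{1..Q}. f s)"
      by (rule sum_mono2) (use that nn in auto)
    thus ?thesis using N by linarith
  qed
  thus ?thesis by blast
qed

theorem theorem1:
  fixes M :: "'a measure" and E :: "nat \<Rightarrow> 'a set" and C :: real
  assumes "prob_space M"
    and "\<And>i. E i \<in> sets M"
    and "(\<Sum>i. ennreal (measure M (E (Suc i)))) = \<infinity>"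
    and "C > 0"
    and "\<exists>\<^sub>\<infinity>Q. (\<Sum>s\<in>{1..Q}. \<Sum>t\<in>{1..Q}. measure M (E s \<inter> E t))
                 \<le> C * (\<Sum>s\<in>{1..Q}. measure M (E s))^2"
    and "cond_M1 M E"
  shows "measure M (limsup_set E) = 1"
proof -
  interpret prob_space M by fact
  note Em = assms(2)
  define Uq where "Uq q = (\<Union>j\<in>{q..}. E j)" for q
  have Uqm: "Uq q \<in> sets M" for q unfolding Uq_def using Em by auto
  have key: "measure M (Uq q) = 1" if q1: "q \<ge> 1" for q
  proof (rule ccontr)
    assume ne: "measure M (Uq q) \<noteq> 1"
    define a where "a = measure M (Uq q)"
    have a1: "a < 1" using ne prob_le_1[of "Uq q"] unfolding a_def by linarith
    have a0: "a \<ge> 0" unfolding a_def by simp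
    define \<kappa> where "\<kappa> = (1 - a) / 2"
    have k0: "\<kappa> > 0" using a1 unfolding \<kappa>_def by simp
    define \<eta> where "\<eta> = \<kappa>^2 / (8 * C)"
    have e0: "\<eta> > 0" using k0 assms(4) unfolding \<eta>_def by simp
    define Bn where "Bn n = (\<Union>j\<in>{q..q+n}. E j)" for n
    have Bnm: "Bn n \<in> sets M" for n unfolding Bn_def using Em by auto
    have inc: "incseq Bn" unfolding Bn_def incseq_def by (auto, meson add_left_mono atLeastAtMost_iff order.trans)
    have UB: "(\<Union>n. Bn n) = Uq q" unfolding Bn_def Uq_def
      by (auto, metis atLeastAtMost_iff le_add_diff_inverse order_refl)
    have "(\<lambda>n. measure M (Bn n)) \<longlonglongrightarrow> a"
      using Lim_measure_incseq[of Bn M] Bnm inc UB unfolding a_def by auto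
    hence "eventually (\<lambda>n. measure M (Bn n) > a - \<eta>) sequentially"
      using e0 by (intro order_tendstoD(1)) auto
    then obtain N0 where N0: "\<And>n. n \<ge> N0 \<Longrightarrow> measure M (Bn n) > a - \<eta>"
      by (auto simp: eventually_at_top_linorder)
    define q2 where "q2 = q + (N0 + 1)"
    define B where "B = (\<Union>j\<in>{q..q2}. E j)"
    have BB: "B = Bn (N0+1)" unfolding B_def Bn_def q2_def by simp
    have Bm: "B \<in> sets M" using BB Bnm by simp
    have muB: "measure M B > a - \<eta>" using N0[of "N0+1"] BB by simp
    have BU: "B \<subseteq> Uq q" unfolding B_def Uq_def by auto
    have muBa: "measure M B \<le> a" unfolding a_def using BU Uqm by (rule finite_measure_mono)
    have "q < q2" unfolding q2_def by simp
    then obtain i0 where i0: "\<And>i. i \<ge> i0 \<Longrightarrow> measure M (B \<inter> E i) \<le> (1 + \<kappa>) * measure M B * measure M (E i)"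
      using assms(6) k0 q1 unfolding cond_M1_def B_def by blast
    define m where "m = max i0 (q2 + 1)"
    have mi0: "m \<ge> i0" and mq: "m \<ge> q" and m1: "m \<ge> 1" unfolding m_def q2_def by auto
    define K where "K = (\<Sum>s\<in>{1..<m}. measure M (E s))"
    have K0: "K \<ge> 0" unfolding K_def by (simp add: sum_nonneg)
    obtain N where N: "\<And>Q. Q \<ge> N \<Longrightarrow> (\<Sum>s\<in>{1..Q}. measure M (E s)) > 2 * K"
      using diverge_partial[of "\<lambda>i. measure M (E i)", OF _ assms(3)] by auto
    obtain Q where Q: "Q > max N m" and QC: "(\<Sum>s\<in>{1..Q}. \<Sum>t\<in>{1..Q}. measure M (E s \<inter> E t))
                 \<le> C * (\<Sum>s\<in>{1..Q}. measure M (E s))^2"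
      using assms(5) unfolding INFM_nat by blast
    define T where "T = (\<Sum>s\<in>{1..Q}. measure M (E s))"
    define R where "R = (\<Sum>s\<in>{m..Q}. measure M (E s))"
    have T2K: "T > 2 * K" unfolding T_def using N Q by auto
    have "{1..Q} = {1..<m} \<union> {m..Q}" using Q m1 by auto
    hence TKR: "T = K + R" unfolding T_def K_def R_def
      by (simp add: sum.union_disjoint[symmetric] ivl_disj_int)
    have T0: "T > 0" using T2K K0 by linarith
    have RT: "R \<ge> T / 2" using TKR T2K by linarith
    define F where "F i = E i - B" for i
    have Fm: "F i \<in> sets M" for i unfolding F_def using Em Bm by auto
    have CE: "(\<Sum>i\<in>{m..Q}. measure M (F i))^2 \<le> measure M (\<Union>i\<in>{m..Q}. F i) * (\<Sum>s\<in>{m..Q}. \<Sum>t\<in>{m..Q}. measure M (F s \<inter> F t))"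
      by (rule chung_erdos[OF assms(1)]) (auto simp: Fm)
    have Fi: "measure M (F i) \<ge> \<kappa> * measure M (E i)" if "i \<ge> i0" for i
    proof -
      have d: "measure M (F i) = measure M (E i) - measure M (B \<inter> E i)"
        unfolding F_def using finite_measure_Diff'[OF Em Bm, of i] by (simp add: Int_commute)
      have "(1 + \<kappa>) * measure M B \<le> 1 - \<kappa>"
      proof -
        have "(1 + \<kappa>) * measure M B \<le> (1 + \<kappa>) * a" using muBa k0 by (intro mult_left_mono) auto
        also have "\<dots> \<le> 1 - \<kappa>" using mult_nonneg_nonneg[of "1-a" "1-a"] a1 unfolding \<kappa>_def by (simp add: field_simps algebra_simps)
        finally show ?thesis .
      qed
      hence "(1 + \<kappa>) * measure M B * measure M (E i) \<le> (1 - \<kappa>) * measure M (E i)"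
        by (intro mult_right_mono) auto
      thus ?thesis using d i0[OF that] by (simp add: algebra_simps)
    qed
    have S1: "\<kappa> * R \<le> (\<Sum>i\<in>{m..Q}. measure M (F i))"
      unfolding R_def sum_distrib_left using Fi mi0 by (intro sum_mono) auto
    have kR0: "0 \<le> \<kappa> * R" using RT T0 k0 by simp
    have S1': "(\<kappa> * R)^2 \<le> (\<Sum>i\<in>{m..Q}. measure M (F i))^2"
      using S1 kR0 by (intro power_mono) auto
    have X1: "(\<Sum>s\<in>{m..Q}. \<Sum>t\<in>{m..Q}. measure M (F s \<inter> F t)) \<le> (\<Sum>s\<in>{m..Q}. \<Sum>t\<in>{m..Q}. measure M (E s \<inter> E t))"
      unfolding F_def by (intro sum_mono finite_measure_mono) (auto simp: Em)
    have X2: "(\<Sum>s\<in>{m..Q}. \<Sum>t\<in>{m..Q}. measure M (E s \<inter> E t)) \<le> (\<Sum>s\<in>{m..Q}. \<Sum>t\<in>{1..Q}. measure M (E s \<inter> E t))"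
      using m1 by (intro sum_mono sum_mono2) auto
    have X3: "(\<Sum>s\<in>{m..Q}. \<Sum>t\<in>{1..Q}. measure M (E s \<inter> E t)) \<le> (\<Sum>s\<in>{1..Q}. \<Sum>t\<in>{1..Q}. measure M (E s \<inter> E t))"
      using m1 by (intro sum_mono2) (auto intro: sum_nonneg)
    have X: "(\<Sum>s\<in>{m..Q}. \<Sum>t\<in>{m..Q}. measure M (F s \<inter> F t)) \<le> C * T^2"
      using X1 X2 X3 QC unfolding T_def by linarith
    have X0: "0 \<le> (\<Sum>s\<in>{m..Q}. \<Sum>t\<in>{m..Q}. measure M (F s \<inter> F t))" by (intro sum_nonneg) auto
    have UF: "(\<Union>i\<in>{m..Q}. F i) \<subseteq> Uq q - B" unfolding F_def Uq_def using mq by (auto, meson atLeast_iff order.trans)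
    have "measure M (\<Union>i\<in>{m..Q}. F i) \<le> measure M (Uq q - B)"
      using UF Uqm Bm by (intro finite_measure_mono) auto
    also have "\<dots> = a - measure M B" unfolding a_def using finite_measure_Diff[OF Uqm Bm BU] .
    finally have muU: "measure M (\<Union>i\<in>{m..Q}. F i) < \<eta>" using muB by linarith
    have "measure M (\<Union>i\<in>{m..Q}. F i) * (\<Sum>s\<in>{m..Q}. \<Sum>t\<in>{m..Q}. measure M (F s \<inter> F t)) \<le> \<eta> * (C * T^2)"
      using muU X X0 e0 by (intro mult_mono) auto
    also have "\<dots> = \<kappa>^2 * T^2 / 8" unfolding \<eta>_def using assms(4) by simp
    finally have A1: "(\<kappa> * R)^2 \<le> \<kappa>^2 * T^2 / 8" using CE S1' by linarith
    have "\<kappa> * T / 2 \<le> \<kappa> * R" using RT k0 by simp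
    hence "(\<kappa> * T / 2)^2 \<le> (\<kappa> * R)^2" using k0 T0 by (intro power_mono) auto
    hence "\<kappa>^2 * T^2 / 4 \<le> (\<kappa> * R)^2" by (simp add: power_mult_distrib power_divide)
    moreover have "\<kappa>^2 * T^2 > 0" using k0 T0 by simp
    ultimately show False using A1 by linarith
  qed
  have LS: "limsup_set E = (\<Inter>i. Uq (Suc i))"
    unfolding limsup_set_def Uq_def
    by (auto, metis Suc_pred' atLeast_iff less_eq_Suc_le)
  have "(\<lambda>i. measure M (Uq (Suc i))) \<longlonglongrightarrow> measure M (\<Inter>i. Uq (Suc i))"
    proof (rule finite_Lim_measure_decseq)
    show "range (\<lambda>i. Uq (Suc i)) \<subseteq> events" using Uqm by auto
    show "decseq (\<lambda>i. Uq (Suc i))" unfolding decseq_def Uq_def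
      by (auto, meson Suc_le_mono atLeast_iff order.trans)
  qed
  moreover have "(\<lambda>i. measure M (Uq (Suc i))) = (\<lambda>i. 1)" using key by auto
  ultimately have "(\<lambda>i. 1::real) \<longlonglongrightarrow> measure M (limsup_set E)" using LS by simp
  thus ?thesis using LIMSEQ_unique tendsto_const by blast
qed

end
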